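(* For every even integer $k\ge 0$ and each sign $\pm$, $h^{\pm}_k(2)=t^{\pm}_k(2)$.
   Context: Fix a permutation $(a,b,c)$ of $(1,2,3)$. $T_\pm$ is the directed graph on vertices $abc,bca,cab$ having both arcs between each pair; the clockwise arcs $abc\to cab$, $cab\to bca$, $bca\to abc$ have sign $+$ and their reverses sign $-$. $H_\pm$ is the directed graph on the $6$-cycle $aba-bcc-aab-cbc-baa-ccb-aba$ with both arcs for each edge; the clockwise direction is $aba\to ccb\to baa\to cbc\to aab\to bcc\to aba$, clockwise arcs have sign $-$ and counterclockwise arcs (their reverses) sign $+$. A walk is positive (negative) if the product of the signs of its arcs is $+$ ($-$). For vertices $x,y$ such that the clockwise path from $x$ to $y$ has length $\ell$, $t^{+}_k(\ell)$ (resp. $t^-_k(\ell)$) is the number of positive (resp. negative) walks of length $k$ from $x$ to $y$ in $T_\pm$, and $h^{\pm}_k(\ell)$ is defined analogously in $H_\pm$. *)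

theory Defs
  imports Main
begin

text \<open>A signed "cycle" digraph: the vertices are listed in clockwise order in vs;
  every edge of the cycle carries both arcs; clockwise arcs have sign s,
  counterclockwise arcs have sign -s.\<close>

definition cw :: "'v list \<Rightarrow> 'v \<Rightarrow> 'v \<Rightarrow> bool" where
  "cw vs u v \<longleftrightarrow> (\<exists>i<length vs. u = vs ! i \<and> v = vs ! ((i + 1) mod length vs))"

definition arc :: "'v list \<Rightarrow> 'v \<Rightarrow> 'v \<Rightarrow> bool" where
  "arc vs u v \<longleftrightarrow> cw vs u v \<or> cw vs v u"

definition asign :: "'v list \<Rightarrow> int \<Rightarrow> 'v \<Rightarrow> 'v \<Rightarrow> int" where
  "asign vs s u v = (if cw vs u v then s else - s)"

text \<open>Walks of length k from x to y, as vertex sequences (each ordered pair of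
  vertices carries at most one arc in the graphs considered, as length vs \<ge> 3).\<close>
definition walks :: "'v list \<Rightarrow> nat \<Rightarrow> 'v \<Rightarrow> 'v \<Rightarrow> 'v list set" where
  "walks vs k x y = {ws. length ws = k + 1 \<and> ws ! 0 = x \<and> ws ! k = y \<and>
      (\<forall>i<k. arc vs (ws ! i) (ws ! (i + 1)))}"

definition wsign :: "'v list \<Rightarrow> int \<Rightarrow> 'v list \<Rightarrow> int" where
  "wsign vs s ws = (\<Prod>i<length ws - 1. asign vs s (ws ! i) (ws ! (i + 1)))"

definition nwalks :: "'v list \<Rightarrow> int \<Rightarrow> int \<Rightarrow> nat \<Rightarrow> 'v \<Rightarrow> 'v \<Rightarrow> nat" where
  "nwalks vs s \<sigma> k x y = card {ws \<in> walks vs k x y. wsign vs s ws = \<sigma>}"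

definition cwdist :: "'v list \<Rightarrow> 'v \<Rightarrow> 'v \<Rightarrow> nat \<Rightarrow> bool" where
  "cwdist vs x y l \<longleftrightarrow> l < length vs \<and>
     (\<exists>i<length vs. x = vs ! i \<and> y = vs ! ((i + l) mod length vs))"

definition T_cyc :: "nat \<Rightarrow> nat \<Rightarrow> nat \<Rightarrow> nat list list" where
  "T_cyc a b c = [[a,b,c], [c,a,b], [b,c,a]]"

definition T_sign :: int where "T_sign = 1"

definition H_cyc :: "nat \<Rightarrow> nat \<Rightarrow> nat \<Rightarrow> nat list list" where
  "H_cyc a b c = [[a,b,a], [c,c,b], [b,a,a], [c,b,c], [a,a,b], [b,c,c]]"

definition H_sign :: int where "H_sign = -1"

end

theory Submission
  imports Defs
begin

fun F :: "nat \<Rightarrow> int \<Rightarrow> nat \<Rightarrow> int \<Rightarrow> int \<Rightarrow> nat" where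
  "F n s 0 d \<sigma> = (if d mod int n = 0 \<and> \<sigma> = 1 then 1 else 0)"
| "F n s (Suc k) d \<sigma> = F n s k (d - 1) (\<sigma> * s) + F n s k (d + 1) (\<sigma> * (- s))"

lemma F_inv:
  "F 6 (-1) k d \<sigma> = (if even (int k + d) then F 3 1 k d (\<sigma> * (-1)^k) else 0)"
proof (induction k arbitrary: d \<sigma>)
  case 0
  then show ?case by simp presburger
next
  case (Suc k)
  show ?case
    apply (simp only: F.simps Suc.IH)
    apply (auto simp: algebra_simps)
    done
qed

definition idx :: "nat \<Rightarrow> int \<Rightarrow> nat" where "idx n d = nat (d mod int n)"

locale cyc =
  fixes vs :: "'v list" and s :: int
  assumes dist: "distinct vs" and len: "length vs \<ge> 3" and ss: "s * s = 1"
begin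

abbreviation "n \<equiv> length vs"
abbreviation "V d \<equiv> vs ! idx n d"

lemma idx_lt: "idx n d < n"
proof -
  have np: "0 < int n" using len by (cases vs) auto
  have "0 \<le> d mod int n" "d mod int n < int n" using pos_mod_sign[OF np] pos_mod_bound[OF np] by auto
  then show ?thesis unfolding idx_def by linarith
qed

lemma V_eq: "V d = V e \<longleftrightarrow> int n dvd (d - e)"
proof -
  have "V d = V e \<longleftrightarrow> idx n d = idx n e"
    using dist idx_lt by (simp add: nth_eq_iff_index_eq)
  also have "\<dots> \<longleftrightarrow> d mod int n = e mod int n"
  proof -
    have np: "0 < int n" using len by (cases vs) auto
    have "int (nat (d mod int n)) = d mod int n" "int (nat (e mod int n)) = e mod int n"
      using pos_mod_sign[OF np] by (simp_all add: nat_0_le)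
    then show ?thesis unfolding idx_def by (metis of_nat_eq_iff)
  qed
  also have "\<dots> \<longleftrightarrow> int n dvd (d - e)" by (rule mod_eq_dvd_iff)
  finally show ?thesis .
qed

lemma cw_char: "cw vs u v \<longleftrightarrow> (\<exists>d. u = V d \<and> v = V (d + 1))"
proof
  assume "cw vs u v"
  then obtain m where m: "m < n" "u = vs ! m" "v = vs ! ((m + 1) mod n)"
    unfolding cw_def by blast
  have "idx n (int m) = m" using m(1) unfolding idx_def by simp
  moreover have "idx n (int m + 1) = (m + 1) mod n" unfolding idx_def
    by (metis nat_int of_nat_Suc Suc_eq_plus1 zmod_int add.commute)
  ultimately show "\<exists>d. u = V d \<and> v = V (d + 1)" using m by metis
next
  assume "\<exists>d. u = V d \<and> v = V (d + 1)"
  then obtain d where d: "u = V d" "v = V (d + 1)" by blast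
  have "(idx n d + 1) mod n = idx n (d + 1)" unfolding idx_def
  proof -
    have np: "0 < int n" using len by (cases vs) auto
    have nn: "int (nat (d mod int n)) = d mod int n" using pos_mod_sign[OF np, of d] by (rule nat_0_le)
    have "int ((nat (d mod int n) + 1) mod n) = (int (nat (d mod int n)) + 1) mod int n"
      by (simp only: zmod_int of_nat_add of_nat_1)
    also have "\<dots> = (d mod int n + 1) mod int n" by (simp only: nn)
    finally have "int ((nat (d mod int n) + 1) mod n) = (d mod int n + 1) mod int n" .
    also have "\<dots> = (d + 1) mod int n" by (simp add: mod_add_left_eq)
    finally show "(nat (d mod int n) + 1) mod n = nat ((d + 1) mod int n)" by simp
  qed
  then show "cw vs u v" unfolding cw_def using d idx_lt by metis
qed

lemma cw_to: "cw vs u (V d) \<longleftrightarrow> u = V (d - 1)"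
proof
  assume "cw vs u (V d)"
  then obtain e where e: "u = V e" "V d = V (e + 1)" using cw_char by blast
  then have "int n dvd (d - (e + 1))" using V_eq by blast
  then have "int n dvd (e - (d - 1))"
    by (metis dvd_minus_iff minus_diff_eq diff_diff_eq2 diff_add_eq add.commute)
  then show "u = V (d - 1)" using e V_eq by blast
next
  assume "u = V (d - 1)"
  then show "cw vs u (V d)" using cw_char by fastforce
qed

lemma cw_from: "cw vs (V d) u \<longleftrightarrow> u = V (d + 1)"
proof
  assume "cw vs (V d) u"
  then obtain e where e: "V d = V e" "u = V (e + 1)" using cw_char by blast
  then have "int n dvd (d - e)" using V_eq by blast
  then have "int n dvd ((e + 1) - (d + 1))"
    using dvd_minus_iff[of "int n" "d - e"] by (simp add: algebra_simps)
  then show "u = V (d + 1)" using e V_eq by blast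
next
  assume "u = V (d + 1)"
  then show "cw vs (V d) u" using cw_char by fastforce
qed

lemma ne: "V (d - 1) \<noteq> V (d + 1)"
proof
  assume "V (d - 1) = V (d + 1)"
  then have "int n dvd ((d - 1) - (d + 1))" using V_eq by blast
  then have "int n dvd 2" by (simp add: algebra_simps)
  then have "int n \<le> 2" by (rule zdvd_imp_le) simp
  then show False using len by simp
qed

lemma arc_to: "arc vs u (V d) \<longleftrightarrow> u = V (d - 1) \<or> u = V (d + 1)"
  unfolding arc_def using cw_to cw_from by blast

lemma asign1: "asign vs s (V (d - 1)) (V d) = s"
  unfolding asign_def using cw_to by simp

lemma asign2: "asign vs s (V (d + 1)) (V d) = - s"
  unfolding asign_def cw_to using ne[of d] by auto

end

lemma arc_in: "arc vs u v \<Longrightarrow> v \<in> set vs"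
  unfolding arc_def cw_def
proof (elim disjE exE conjE)
  fix i assume "i < length vs" "v = vs ! ((i + 1) mod length vs)"
  then have "0 < length vs" by linarith
  then have "(i + 1) mod length vs < length vs" by (rule mod_less_divisor)
  then show "v \<in> set vs" using \<open>v = vs ! ((i + 1) mod length vs)\<close> by (simp only: nth_mem)
next
  fix i assume "i < length vs" "v = vs ! i"
  then show "v \<in> set vs" by (simp add: nth_mem)
qed

lemma walks_finite: "finite (walks vs k x y)"
proof -
  have "walks vs k x y \<subseteq> {ws. set ws \<subseteq> insert x (set vs) \<and> length ws = Suc k}"
  proof
    fix ws assume w: "ws \<in> walks vs k x y"
    have "set ws \<subseteq> insert x (set vs)"
    proof
      fix z assume "z \<in> set ws"
      then obtain j where j: "j < length ws" "z = ws ! j" by (metis in_set_conv_nth)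
      show "z \<in> insert x (set vs)"
      proof (cases j)
        case 0 then show ?thesis using w j unfolding walks_def by simp
      next
        case (Suc i)
        have ar: "arc vs (ws ! i) (ws ! (i + 1))" using w j Suc unfolding walks_def by auto
        show ?thesis using arc_in[OF ar] j Suc by simp
      qed
    qed
    then show "ws \<in> {ws. set ws \<subseteq> insert x (set vs) \<and> length ws = Suc k}"
      using w unfolding walks_def by simp
  qed
  moreover have "finite {ws. set ws \<subseteq> insert x (set vs) \<and> length ws = Suc k}"
    by (rule finite_lists_length_eq) simp
  ultimately show ?thesis by (rule finite_subset)
qed

lemma walks_Suc_iff:
  "ws' \<in> walks vs (Suc k) x y \<longleftrightarrow> (\<exists>ws u. ws' = ws @ [y] \<and> ws \<in> walks vs k x u \<and> arc vs u y)"
proof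
  assume w: "ws' \<in> walks vs (Suc k) x y"
  let ?ws = "butlast ws'"
  have l: "length ws' = k + 2" using w unfolding walks_def by simp
  have e: "ws' = ?ws @ [y]"
  proof -
    have ne: "ws' \<noteq> []" using l by auto
    have "last ws' = ws' ! (length ws' - 1)" using ne by (rule last_conv_nth)
    also have "\<dots> = y" using w l unfolding walks_def by simp
    finally show ?thesis using append_butlast_last_id[OF ne] by simp
  qed
  have nb: "\<And>i. i < k + 1 \<Longrightarrow> ?ws ! i = ws' ! i" using l by (simp add: nth_butlast)
  have "?ws \<in> walks vs k x (ws' ! k)"
    using w l nb unfolding walks_def by auto
  moreover have "arc vs (ws' ! k) y" using w unfolding walks_def by auto
  ultimately show "\<exists>ws u. ws' = ws @ [y] \<and> ws \<in> walks vs k x u \<and> arc vs u y" using e by blast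
next
  assume "\<exists>ws u. ws' = ws @ [y] \<and> ws \<in> walks vs k x u \<and> arc vs u y"
  then obtain ws u where h: "ws' = ws @ [y]" "ws \<in> walks vs k x u" "arc vs u y" by blast
  have l: "length ws = k + 1" and w0: "ws ! 0 = x" and wk: "ws ! k = u"
    and ar: "\<forall>i<k. arc vs (ws ! i) (ws ! (i + 1))" using h(2) unfolding walks_def by auto
  show "ws' \<in> walks vs (Suc k) x y" unfolding walks_def
  proof (intro CollectI conjI allI impI)
    show "length ws' = Suc k + 1" using h l by simp
    show "ws' ! 0 = x" using h l w0 by (simp add: nth_append)
    show "ws' ! Suc k = y" using h l by (simp add: nth_append)
    fix i assume "i < Suc k"
    then show "arc vs (ws' ! i) (ws' ! (i + 1))"
      using h l ar wk by (cases "i < k") (auto simp: nth_append less_Suc_eq)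
  qed
qed

lemma wsign_snoc:
  assumes "ws \<in> walks vs k x u"
  shows "wsign vs s (ws @ [y]) = wsign vs s ws * asign vs s u y"
proof -
  have l: "length ws = k + 1" and wk: "ws ! k = u" using assms unfolding walks_def by auto
  have "wsign vs s (ws @ [y]) = (\<Prod>i<Suc k. asign vs s ((ws @ [y]) ! i) ((ws @ [y]) ! (i + 1)))"
    unfolding wsign_def using l by simp
  also have "\<dots> = (\<Prod>i<k. asign vs s ((ws @ [y]) ! i) ((ws @ [y]) ! (i + 1))) * asign vs s u y"
    using l wk by (simp add: nth_append)
  also have "(\<Prod>i<k. asign vs s ((ws @ [y]) ! i) ((ws @ [y]) ! (i + 1))) = wsign vs s ws"
    unfolding wsign_def using l by (intro prod.cong) (auto simp: nth_append)
  finally show ?thesis .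
qed

context cyc begin

lemma main: "nwalks vs s \<sigma> k (V e) (V d) = F n s k (d - e) \<sigma>"
proof (induction k arbitrary: d \<sigma>)
  case 0
  have "{ws \<in> walks vs 0 (V e) (V d). wsign vs s ws = \<sigma>} =
        (if V e = V d \<and> \<sigma> = 1 then {[V e]} else {})"
    unfolding walks_def wsign_def by (auto simp: length_Suc_conv)
  moreover have "V e = V d \<longleftrightarrow> (d - e) mod int n = 0"
    using V_eq[of e d] by (metis dvd_eq_mod_eq_0 dvd_minus_iff minus_diff_eq)
  ultimately show ?case unfolding nwalks_def by auto
next
  case (Suc k)
  let ?x = "V e"
  let ?S = "\<lambda>u \<tau>. {ws \<in> walks vs k ?x u. wsign vs s ws = \<tau>}"
  let ?A = "?S (V (d - 1)) (\<sigma> * s)"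
  let ?B = "?S (V (d + 1)) (\<sigma> * - s)"
  have eq: "{ws \<in> walks vs (Suc k) ?x (V d). wsign vs s ws = \<sigma>} = (\<lambda>ws. ws @ [V d]) ` (?A \<union> ?B)"
  proof (rule set_eqI, rule iffI)
    fix ws' assume "ws' \<in> {ws \<in> walks vs (Suc k) ?x (V d). wsign vs s ws = \<sigma>}"
    then have w: "ws' \<in> walks vs (Suc k) ?x (V d)" and sg: "wsign vs s ws' = \<sigma>" by auto
    obtain ws u where h: "ws' = ws @ [V d]" "ws \<in> walks vs k ?x u" "arc vs u (V d)"
      using walks_Suc_iff[THEN iffD1, OF w] by blast
    have sg2: "wsign vs s ws * asign vs s u (V d) = \<sigma>"
      using sg h(1) wsign_snoc[OF h(2), of s "V d"] by simp
    have "u = V (d - 1) \<or> u = V (d + 1)" using h(3) arc_to by blast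
    then have "ws \<in> ?A \<union> ?B"
    proof
      assume u: "u = V (d - 1)"
      then have "wsign vs s ws * s = \<sigma>" using sg2 asign1 by simp
      then have "wsign vs s ws = \<sigma> * s" using ss by (metis mult.assoc mult.right_neutral)
      then show ?thesis using h u by auto
    next
      assume u: "u = V (d + 1)"
      then have "wsign vs s ws * - s = \<sigma>" using sg2 asign2 by simp
      then have "wsign vs s ws = \<sigma> * - s" using ss
        by (metis mult.assoc mult.right_neutral minus_mult_minus)
      then show ?thesis using h u by auto
    qed
    then show "ws' \<in> (\<lambda>ws. ws @ [V d]) ` (?A \<union> ?B)" using h by blast
  next
    fix ws' assume "ws' \<in> (\<lambda>ws. ws @ [V d]) ` (?A \<union> ?B)"
    then obtain ws where h: "ws' = ws @ [V d]" "ws \<in> ?A \<union> ?B" by blast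
    show "ws' \<in> {ws \<in> walks vs (Suc k) ?x (V d). wsign vs s ws = \<sigma>}"
      using h(2)
    proof
      assume a: "ws \<in> ?A"
      have ar: "arc vs (V (d - 1)) (V d)" using arc_to by blast
      have wa: "ws \<in> walks vs k ?x (V (d - 1))" and sa: "wsign vs s ws = \<sigma> * s" using a by auto
      have "ws' \<in> walks vs (Suc k) ?x (V d)"
        using walks_Suc_iff[of ws' vs k ?x "V d"] h(1) wa ar by blast
      moreover have "wsign vs s ws' = \<sigma> * s * s"
        using h(1) wsign_snoc[OF wa, of s "V d"] asign1 sa by simp
      ultimately have "ws' \<in> walks vs (Suc k) ?x (V d)" "wsign vs s ws' = \<sigma>"
        using ss by (simp_all add: mult.assoc)
      then show ?thesis by simp
    next
      assume a: "ws \<in> ?B"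
      have ar: "arc vs (V (d + 1)) (V d)" using arc_to by blast
      have wa: "ws \<in> walks vs k ?x (V (d + 1))" and sa: "wsign vs s ws = \<sigma> * - s" using a by auto
      have "ws' \<in> walks vs (Suc k) ?x (V d)"
        using walks_Suc_iff[of ws' vs k ?x "V d"] h(1) wa ar by blast
      moreover have "wsign vs s ws' = \<sigma> * - s * - s"
        using h(1) wsign_snoc[OF wa, of s "V d"] asign2 sa by simp
      ultimately have "ws' \<in> walks vs (Suc k) ?x (V d)" "wsign vs s ws' = \<sigma>"
        using ss by (simp_all add: mult.assoc)
      then show ?thesis by simp
    qed
  qed
  have fA: "finite ?A" by (rule finite_subset[OF _ walks_finite], blast)
  have fB: "finite ?B" by (rule finite_subset[OF _ walks_finite], blast)
  have disj: "?A \<inter> ?B = {}"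
  proof -
    have "\<And>ws u. ws \<in> walks vs k ?x u \<Longrightarrow> ws ! k = u" unfolding walks_def by auto
    then show ?thesis
    proof (intro equals0I)
      fix ws assume kk: "\<And>ws u. ws \<in> walks vs k ?x u \<Longrightarrow> ws ! k = u" and "ws \<in> ?A \<inter> ?B"
      then have "ws ! k = V (d - 1)" "ws ! k = V (d + 1)" by auto
      then show False using ne[of d] by simp
    qed
  qed
  have inj: "inj_on (\<lambda>ws. ws @ [V d]) (?A \<union> ?B)" by (rule inj_onI) simp
  have "nwalks vs s \<sigma> (Suc k) ?x (V d) = card ?A + card ?B"
    unfolding nwalks_def eq card_image[OF inj] using card_Un_disjoint[OF fA fB disj] by simp
  also have "\<dots> = F n s k (d - 1 - e) (\<sigma> * s) + F n s k (d + 1 - e) (\<sigma> * - s)"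
    using Suc.IH unfolding nwalks_def by simp
  finally show ?case by (simp add: algebra_simps)
qed

lemma dist2:
  assumes "cwdist vs x y 2"
  shows "nwalks vs s \<sigma> k x y = F n s k 2 \<sigma>"
proof -
  obtain i where i: "i < n" "x = vs ! i" "y = vs ! ((i + 2) mod n)"
    using assms unfolding cwdist_def by blast
  have "idx n (int i) = i" using i unfolding idx_def by simp
  moreover have "idx n (int i + 2) = (i + 2) mod n" unfolding idx_def
    by (metis nat_int of_nat_add of_nat_numeral zmod_int)
  ultimately have "x = V (int i)" "y = V (int i + 2)" using i by simp_all
  then show ?thesis using main[where e="int i" and d="int i + 2"] by simp
qed

end

theorem lemma12:
  fixes a b c :: nat and k :: nat and \<sigma> :: int
    and x y :: "nat list" and x' y' :: "nat list"
  assumes "{a, b, c} = {1, 2, 3}"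
    and "even k"
    and "\<sigma> = 1 \<or> \<sigma> = -1"
    and "cwdist (H_cyc a b c) x y 2"
    and "cwdist (T_cyc a b c) x' y' 2"
  shows "nwalks (H_cyc a b c) H_sign \<sigma> k x y = nwalks (T_cyc a b c) T_sign \<sigma> k x' y'"
proof -
  have m: "1 \<in> {a,b,c}" "2 \<in> {a,b,c}" "3 \<in> {a,b,c}" using assms(1) by auto
  have d: "a \<noteq> b" "a \<noteq> c" "b \<noteq> c" using m by auto
  interpret H: cyc "H_cyc a b c" H_sign
    by unfold_locales (auto simp: H_cyc_def H_sign_def d d[symmetric])
  interpret T: cyc "T_cyc a b c" T_sign
    by unfold_locales (auto simp: T_cyc_def T_sign_def d d[symmetric])
  have hl: "length (H_cyc a b c) = 6" by (simp add: H_cyc_def)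
  have tl: "length (T_cyc a b c) = 3" by (simp add: T_cyc_def)
  have "nwalks (H_cyc a b c) H_sign \<sigma> k x y = F 6 (-1) k 2 \<sigma>"
    using H.dist2[OF assms(4)] unfolding hl H_sign_def .
  also have "\<dots> = F 3 1 k 2 \<sigma>" using F_inv assms(2) by simp
  also have "\<dots> = nwalks (T_cyc a b c) T_sign \<sigma> k x' y'"
    using T.dist2[OF assms(5)] unfolding tl T_sign_def by simp
  finally show ?thesis .
qed

end
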